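(* For every map $M$, $V\cap F\subseteq Z$.
   Context: A map is a triple $M=(C_M,v_M,f_M)$ where $C_M$ is a finite cubic graph (multiple edges allowed) and $v_M,f_M$ are disjoint perfect matchings whose union is a disjoint union of 4-cycles, the squares of $M$ (set $SQ(M)$). $a_M=E(C_M)\setminus(v_M\cup f_M)$; $z_M$ is the perfect matching on $V(C_M)$ formed by the diagonals of the squares; $Q_M=C_M\cup z_M$. For a map $X$, $G_X$ has as vertices the cycles of $v_X\cup a_X$, as edges the squares of $X$, each square joining the cycles containing its two $v_X$-edges. The dual is $D=(C_M,f_M,v_M)$, the phial is $P=(Q_M\setminus v_M,z_M,f_M)$, and edge sets of $G_M,G_D,G_P$ are identified with $SQ(M)$. $V,F,Z$ are the coboundary (edge-cut) spaces over $GF(2)$ of $G_M,G_D,G_P$, viewed as sets of subsets of $SQ(M)$. *)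

theory Defs
  imports Main
begin

text \<open>A finite cubic multigraph: vertex set Vs, edge set Es (abstract edge names, so
parallel edges are allowed), each edge has a set of exactly two endpoints.\<close>
definition cubic_multigraph :: "'v set \<Rightarrow> 'e set \<Rightarrow> ('e \<Rightarrow> 'v set) \<Rightarrow> bool" where
  "cubic_multigraph Vs Es ends \<longleftrightarrow> finite Vs \<and> finite Es \<and>
     (\<forall>e\<in>Es. ends e \<subseteq> Vs \<and> card (ends e) = 2) \<and>
     (\<forall>x\<in>Vs. card {e\<in>Es. x \<in> ends e} = 3)"

definition perfect_matching :: "'v set \<Rightarrow> 'e set \<Rightarrow> ('e \<Rightarrow> 'v set) \<Rightarrow> 'e set \<Rightarrow> bool" where
  "perfect_matching Vs Es ends m \<longleftrightarrow> m \<subseteq> Es \<and> (\<forall>x\<in>Vs. card {e\<in>m. x \<in> ends e} = 1)"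

definition adj :: "('e \<Rightarrow> 'v set) \<Rightarrow> 'e set \<Rightarrow> 'v \<Rightarrow> 'v \<Rightarrow> bool" where
  "adj ends F x y \<longleftrightarrow> (\<exists>e\<in>F. ends e = {x, y})"

definition reach :: "('v \<Rightarrow> 'v \<Rightarrow> bool) \<Rightarrow> 'v \<Rightarrow> 'v set" where
  "reach R x = {y. R\<^sup>*\<^sup>* x y}"

definition comps :: "'v set \<Rightarrow> ('v \<Rightarrow> 'v \<Rightarrow> bool) \<Rightarrow> 'v set set" where
  "comps Vs R = {reach R x | x. x \<in> Vs}"

text \<open>A map (C_M, v_M, f_M): v, f disjoint perfect matchings of the cubic multigraph whose
union (a 2-regular spanning subgraph) is a disjoint union of 4-cycles, i.e. each of its
components has exactly 4 vertices.\<close>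
definition is_map :: "'v set \<Rightarrow> 'e set \<Rightarrow> ('e \<Rightarrow> 'v set) \<Rightarrow> 'e set \<Rightarrow> 'e set \<Rightarrow> bool" where
  "is_map Vs Es ends v f \<longleftrightarrow> cubic_multigraph Vs Es ends \<and>
     perfect_matching Vs Es ends v \<and> perfect_matching Vs Es ends f \<and> v \<inter> f = {} \<and>
     (\<forall>C\<in>comps Vs (adj ends (v \<union> f)). card C = 4)"

definition squares :: "'v set \<Rightarrow> ('e \<Rightarrow> 'v set) \<Rightarrow> 'e set \<Rightarrow> 'e set \<Rightarrow> 'v set set" where
  "squares Vs ends v f = comps Vs (adj ends (v \<union> f))"

definition a_edges :: "'e set \<Rightarrow> 'e set \<Rightarrow> 'e set \<Rightarrow> 'e set" where
  "a_edges Es v f = Es - (v \<union> f)"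

text \<open>z_M as an adjacency: x,y are the two ends of a diagonal of a square.\<close>
definition diag :: "'v set \<Rightarrow> ('e \<Rightarrow> 'v set) \<Rightarrow> 'e set \<Rightarrow> 'e set \<Rightarrow> 'v \<Rightarrow> 'v \<Rightarrow> bool" where
  "diag Vs ends v f x y \<longleftrightarrow> x \<noteq> y \<and> (\<exists>S\<in>squares Vs ends v f. x \<in> S \<and> y \<in> S) \<and>
     \<not> adj ends (v \<union> f) x y"

text \<open>Ends of a square S in G_X: the cycles (of the relation R) containing the edges of
the matching P (given as adjacency) lying in S.\<close>
definition square_ends :: "('v \<Rightarrow> 'v \<Rightarrow> bool) \<Rightarrow> ('v \<Rightarrow> 'v \<Rightarrow> bool) \<Rightarrow> 'v set \<Rightarrow> 'v set set" where
  "square_ends R P S = {reach R x | x. \<exists>y. P x y \<and> x \<in> S \<and> y \<in> S}"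

definition cut :: "'e set \<Rightarrow> ('e \<Rightarrow> 'w set) \<Rightarrow> 'w set \<Rightarrow> 'e set" where
  "cut Es endp X = {e\<in>Es. (\<exists>u\<in>endp e. u \<in> X) \<and> (\<exists>u\<in>endp e. u \<notin> X)}"

text \<open>Coboundary (edge-cut) space over GF(2), as a set of edge subsets.\<close>
definition cut_space :: "'w set \<Rightarrow> 'e set \<Rightarrow> ('e \<Rightarrow> 'w set) \<Rightarrow> 'e set set" where
  "cut_space W Es endp = {cut Es endp X | X. X \<subseteq> W}"

text \<open>Cut space of G_X, where the cycles of v_X \<union> a_X are the components of Rcyc and the
v_X-edges are given by the adjacency Pv; edge set is SQ(M).\<close>
definition G_cut_space ::
  "'v set \<Rightarrow> 'v set set \<Rightarrow> ('v \<Rightarrow> 'v \<Rightarrow> bool) \<Rightarrow> ('v \<Rightarrow> 'v \<Rightarrow> bool) \<Rightarrow> 'v set set set" where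
  "G_cut_space Vs SQ Rcyc Pv = cut_space (comps Vs Rcyc) SQ (square_ends Rcyc Pv)"

definition V_space :: "'v set \<Rightarrow> 'e set \<Rightarrow> ('e \<Rightarrow> 'v set) \<Rightarrow> 'e set \<Rightarrow> 'e set \<Rightarrow> 'v set set set" where
  "V_space Vs Es ends v f = G_cut_space Vs (squares Vs ends v f)
     (adj ends (v \<union> a_edges Es v f)) (adj ends v)"

definition F_space :: "'v set \<Rightarrow> 'e set \<Rightarrow> ('e \<Rightarrow> 'v set) \<Rightarrow> 'e set \<Rightarrow> 'e set \<Rightarrow> 'v set set set" where
  "F_space Vs Es ends v f = G_cut_space Vs (squares Vs ends v f)
     (adj ends (f \<union> a_edges Es v f)) (adj ends f)"

definition Z_space :: "'v set \<Rightarrow> 'e set \<Rightarrow> ('e \<Rightarrow> 'v set) \<Rightarrow> 'e set \<Rightarrow> 'e set \<Rightarrow> 'v set set set" where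
  "Z_space Vs Es ends v f = G_cut_space Vs (squares Vs ends v f)
     (\<lambda>x y. diag Vs ends v f x y \<or> adj ends (a_edges Es v f) x y) (diag Vs ends v f)"

end

theory Submission
  imports Defs
begin

lemma adj_sym: "adj ends F x y = adj ends F y x"
  by (auto simp: adj_def insert_commute)

lemma adj_Un: "adj ends (A \<union> B) x y \<longleftrightarrow> adj ends A x y \<or> adj ends B x y"
  by (auto simp: adj_def)

lemma adj_mono: "A \<subseteq> B \<Longrightarrow> adj ends A x y \<Longrightarrow> adj ends B x y"
  by (auto simp: adj_def)

lemma rtranclp_sym:
  assumes "\<And>a b. R a b \<Longrightarrow> R b a" "R\<^sup>*\<^sup>* x y" shows "R\<^sup>*\<^sup>* y x"
  using assms(2)
proof (induction rule: rtranclp_induct)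
  case base then show ?case by simp
next
  case (step y z) then show ?case
    by (meson assms(1) converse_rtranclp_into_rtranclp)
qed

lemma reach_eq:
  assumes "\<And>a b. R a b \<Longrightarrow> R b a" "R\<^sup>*\<^sup>* x y" shows "reach R x = reach R y"
proof -
  have "R\<^sup>*\<^sup>* y x" using rtranclp_sym[OF assms] by blast
  then show ?thesis using assms(2) unfolding reach_def
    by (auto intro: rtranclp_trans)
qed

lemma reach_step:
  assumes "\<And>a b. R a b \<Longrightarrow> R b a" "R x y" shows "reach R x = reach R y"
proof -
  have "R\<^sup>*\<^sup>* x y" using assms(2) by blast
  then show ?thesis by (rule reach_eq[rotated]) (rule assms(1))
qed

lemma reach_self: "x \<in> reach R x" by (simp add: reach_def)

locale mapl =
  fixes Vs :: "'v set" and Es :: "'e set" and ends :: "'e \<Rightarrow> 'v set" and v f :: "'e set"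
  assumes M: "is_map Vs Es ends v f"
begin

lemma cub: "cubic_multigraph Vs Es ends" using M by (simp add: is_map_def)
lemma pmv: "perfect_matching Vs Es ends v" using M by (simp add: is_map_def)
lemma pmf: "perfect_matching Vs Es ends f" using M by (simp add: is_map_def)
lemma finV: "finite Vs" using cub by (simp add: cubic_multigraph_def)

lemma adj_in:
  assumes "m \<subseteq> Es" "adj ends m x y" shows "y \<in> Vs \<and> x \<in> Vs \<and> x \<noteq> y"
proof -
  obtain e where e: "e \<in> m" "ends e = {x, y}" using assms(2) by (auto simp: adj_def)
  have "e \<in> Es" using e assms(1) by blast
  then have "ends e \<subseteq> Vs \<and> card (ends e) = 2" using cub
    unfolding cubic_multigraph_def by blast
  then have "{x, y} \<subseteq> Vs" "card {x, y} = 2" using e by auto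
  then show ?thesis by (cases "x = y") auto
qed

lemma pm_ex1:
  assumes "perfect_matching Vs Es ends m" "x \<in> Vs" shows "\<exists>!y. adj ends m x y"
proof -
  have mE: "m \<subseteq> Es" using assms(1) by (simp add: perfect_matching_def)
  have "card {e\<in>m. x \<in> ends e} = 1" using assms by (simp add: perfect_matching_def)
  then obtain e where e: "{e\<in>m. x \<in> ends e} = {e}" by (rule card_1_singletonE)
  then have em: "e \<in> m" "x \<in> ends e" by auto
  then have "card (ends e) = 2" using mE cub by (auto simp: cubic_multigraph_def)
  then obtain a b where ab: "ends e = {a, b}" "a \<noteq> b" by (auto simp: card_2_iff)
  then obtain y where y: "ends e = {x, y}" using em(2) by auto
  show ?thesis
  proof
    show "adj ends m x y" using y em by (auto simp: adj_def)
  next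
    fix y' assume "adj ends m x y'"
    then obtain e' where e': "e' \<in> m" "ends e' = {x, y'}" by (auto simp: adj_def)
    then have "e' = e" using e by auto
    then have "{x, y'} = {x, y}" using e' y by simp
    moreover have "x \<noteq> y" using y ab by auto
    ultimately show "y' = y" by (auto simp: doubleton_eq_iff)
  qed
qed

definition pv where "pv x = (THE y. adj ends v x y)"
definition pf where "pf x = (THE y. adj ends f x y)"

lemma vE: "v \<subseteq> Es" using pmv by (simp add: perfect_matching_def)
lemma fE: "f \<subseteq> Es" using pmf by (simp add: perfect_matching_def)

lemma pv: "x \<in> Vs \<Longrightarrow> adj ends v x (pv x)"
  unfolding pv_def by (rule theI'[OF pm_ex1[OF pmv]])
lemma pf: "x \<in> Vs \<Longrightarrow> adj ends f x (pf x)"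
  unfolding pf_def by (rule theI'[OF pm_ex1[OF pmf]])
lemma pv_eq: "x \<in> Vs \<Longrightarrow> adj ends v x y \<Longrightarrow> y = pv x"
  using pm_ex1[OF pmv] pv by blast
lemma pf_eq: "x \<in> Vs \<Longrightarrow> adj ends f x y \<Longrightarrow> y = pf x"
  using pm_ex1[OF pmf] pf by blast
lemma pv_Vs: assumes x: "x \<in> Vs" shows "pv x \<in> Vs" using adj_in[OF vE pv[OF x]] by simp
lemma pf_Vs: assumes x: "x \<in> Vs" shows "pf x \<in> Vs" using adj_in[OF fE pf[OF x]] by simp
lemma pv_ne: assumes x: "x \<in> Vs" shows "pv x \<noteq> x" using adj_in[OF vE pv[OF x]] by (simp add: eq_commute)
lemma pf_ne: assumes x: "x \<in> Vs" shows "pf x \<noteq> x" using adj_in[OF fE pf[OF x]] by (simp add: eq_commute)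
lemma pv_pv: "x \<in> Vs \<Longrightarrow> pv (pv x) = x"
proof -
  assume x: "x \<in> Vs"
  have "adj ends v (pv x) x" using pv[OF x] adj_sym by metis
  then show ?thesis using pv_eq[OF pv_Vs[OF x]] by simp
qed
lemma pf_pf: "x \<in> Vs \<Longrightarrow> pf (pf x) = x"
proof -
  assume x: "x \<in> Vs"
  have "adj ends f (pf x) x" using pf[OF x] adj_sym by metis
  then show ?thesis using pf_eq[OF pf_Vs[OF x]] by simp
qed

lemma adjvf: "x \<in> Vs \<Longrightarrow> adj ends (v \<union> f) x y \<longleftrightarrow> y = pv x \<or> y = pf x"
proof -
  assume x: "x \<in> Vs"
  show ?thesis
  proof
    assume "adj ends (v \<union> f) x y"
    then have "adj ends v x y \<or> adj ends f x y" by (simp only: adj_Un)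
    then show "y = pv x \<or> y = pf x" using pv_eq[OF x] pf_eq[OF x] by blast
  next
    assume "y = pv x \<or> y = pf x"
    then have "adj ends v x y \<or> adj ends f x y" using pv[OF x] pf[OF x] by blast
    then show "adj ends (v \<union> f) x y" by (simp only: adj_Un)
  qed
qed

abbreviation Q where "Q x \<equiv> reach (adj ends (v \<union> f)) x"

lemma Q_Vs: assumes "x \<in> Vs" shows "Q x \<subseteq> Vs"
proof
  fix y assume "y \<in> Q x"
  then have "(adj ends (v \<union> f))\<^sup>*\<^sup>* x y" by (simp add: reach_def)
  then show "y \<in> Vs"
  proof (induction rule: rtranclp_induct)
    case base then show ?case using assms .
  next
    case (step y z)
    have "v \<union> f \<subseteq> Es" using vE fE by blast
    then show ?case using adj_in[OF _ step.hyps(2)] by simp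
  qed
qed

lemma Q_card: assumes x: "x \<in> Vs" shows "card (Q x) = 4"
proof -
  have all: "\<forall>C\<in>comps Vs (adj ends (v \<union> f)). card C = 4" using M unfolding is_map_def
    by (rule conjunct2[THEN conjunct2, THEN conjunct2, THEN conjunct2])
  have "Q x \<in> comps Vs (adj ends (v \<union> f))" unfolding comps_def using x by blast
  then show ?thesis using all by blast
qed

lemma Q_same: assumes "y \<in> Q x" shows "Q y = Q x"
proof -
  have "(adj ends (v \<union> f))\<^sup>*\<^sup>* x y" using assms by (simp add: reach_def)
  then have "Q x = Q y" by (rule reach_eq[rotated]) (erule adj_sym[THEN iffD1])
  then show ?thesis by simp
qed

lemma Q_pv: assumes x: "x \<in> Vs" shows "pv x \<in> Q x"
proof -
  have "adj ends (v \<union> f) x (pv x)" using pv[OF x] adj_Un[of ends v f] by blast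
  then have "(adj ends (v \<union> f))\<^sup>*\<^sup>* x (pv x)" by (rule r_into_rtranclp)
  then show ?thesis by (simp add: reach_def)
qed
lemma Q_pf: assumes x: "x \<in> Vs" shows "pf x \<in> Q x"
proof -
  have "adj ends (v \<union> f) x (pf x)" using pf[OF x] adj_Un[of ends v f] by blast
  then have "(adj ends (v \<union> f))\<^sup>*\<^sup>* x (pf x)" by (rule r_into_rtranclp)
  then show ?thesis by (simp add: reach_def)
qed

lemma Q_closed_v: assumes x: "x \<in> Vs" and y: "y \<in> Q x" shows "pv y \<in> Q x"
proof -
  have "y \<in> Vs" using Q_Vs[OF x] y by blast
  then have "pv y \<in> Q y" by (rule Q_pv)
  then show ?thesis using Q_same[OF y] by simp
qed
lemma Q_closed_f: assumes x: "x \<in> Vs" and y: "y \<in> Q x" shows "pf y \<in> Q x"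
proof -
  have "y \<in> Vs" using Q_Vs[OF x] y by blast
  then have "pf y \<in> Q y" by (rule Q_pf)
  then show ?thesis using Q_same[OF y] by simp
qed

lemma pv_ne_pf: assumes x: "x \<in> Vs" shows "pv x \<noteq> pf x"
proof
  assume eq: "pv x = pf x"
  have eq2: "pf (pv x) = x" using pf_pf[OF x] eq by simp
  have eq3: "pv (pv x) = x" using pv_pv[OF x] .
  have "Q x \<subseteq> {x, pv x}"
  proof
    fix y assume "y \<in> Q x"
    then have "(adj ends (v \<union> f))\<^sup>*\<^sup>* x y" by (simp add: reach_def)
    then show "y \<in> {x, pv x}"
    proof (induction rule: rtranclp_induct)
      case base then show ?case by simp
    next
      case (step y z)
      have yV: "y \<in> Vs" using step.IH x pv_Vs[OF x] by blast
      then have z: "z = pv y \<or> z = pf y" using adjvf step.hyps(2) by blast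
      from step.IH show ?case
      proof
        assume "y = x" then show ?thesis using z eq by auto
      next
        assume "y \<in> {pv x}" then have "y = pv x" by simp
        then show ?thesis using z eq2 eq3 by auto
      qed
    qed
  qed
  then have "card (Q x) \<le> card {x, pv x}" by (rule card_mono[rotated]) simp
  also have "\<dots> \<le> 2" by (cases "x = pv x") auto
  finally show False using Q_card x by simp
qed

lemma Q_eq: assumes x: "x \<in> Vs"
  shows "Q x = {x, pv x, pf x, pf (pv x)}"
    and "pv (pf x) = pf (pv x)"
    and "x \<noteq> pv x" "x \<noteq> pf x" "x \<noteq> pf (pv x)" "pv x \<noteq> pf x"
        "pv x \<noteq> pf (pv x)" "pf x \<noteq> pf (pv x)"
proof -
  have pvV: "pv x \<in> Vs" using pv_Vs[OF x] .
  have pfV: "pf x \<in> Vs" using pf_Vs[OF x] .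
  have d0: "pv x \<noteq> pf x" using pv_ne_pf[OF x] .
  have d1: "x \<noteq> pv x" "x \<noteq> pf x" using pv_ne[OF x] pf_ne[OF x] by auto
  have d2: "pv x \<noteq> pf (pv x)" using pf_ne[OF pvV] by auto
  have d3: "x \<noteq> pf (pv x)"
  proof
    assume "x = pf (pv x)"
    then have "pf x = pf (pf (pv x))" by (rule arg_cong)
    also have "\<dots> = pv x" using pf_pf[OF pvV] .
    finally show False using d0 by simp
  qed
  have d4: "pf x \<noteq> pf (pv x)"
  proof
    assume "pf x = pf (pv x)"
    then have "pf (pf x) = pf (pf (pv x))" by simp
    then have "x = pv x" using pf_pf[OF pvV] pf_pf[OF x] by simp
    then show False using d1 by simp
  qed
  have sub: "{x, pv x, pf x, pf (pv x)} \<subseteq> Q x"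
    using reach_self[of x] Q_pv[OF x] Q_pf[OF x] Q_closed_f[OF x Q_pv[OF x]] by blast
  have "card {x, pv x, pf x, pf (pv x)} = 4" using d0 d1 d2 d3 d4 by simp
  then show Qe: "Q x = {x, pv x, pf x, pf (pv x)}"
    using card_seteq[OF finite_subset[OF Q_Vs[OF x] finV] sub] Q_card[OF x] by simp
  have "pv (pf x) \<in> Q x" using Q_closed_v[OF x Q_pf[OF x]] .
  moreover have "pv (pf x) \<noteq> x"
  proof
    assume "pv (pf x) = x"
    then have "pv (pv (pf x)) = pv x" by simp
    then show False using pv_pv[OF pfV] d0 by simp
  qed
  moreover have "pv (pf x) \<noteq> pv x"
  proof
    assume "pv (pf x) = pv x"
    then have "pv (pv (pf x)) = pv (pv x)" by simp
    then show False using pv_pv[OF pfV] pv_pv[OF x] d1 by simp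
  qed
  moreover have "pv (pf x) \<noteq> pf x" using pv_ne[OF pfV] .
  ultimately show "pv (pf x) = pf (pv x)" using Qe by auto
  show "x \<noteq> pv x" "x \<noteq> pf x" "x \<noteq> pf (pv x)" "pv x \<noteq> pf x"
        "pv x \<noteq> pf (pv x)" "pf x \<noteq> pf (pv x)" using d0 d1 d2 d3 d4 by auto
qed

lemma squares_eq: "squares Vs ends v f = {Q x | x. x \<in> Vs}"
  by (simp add: squares_def comps_def)

lemma diag_iff: assumes x: "x \<in> Vs"
  shows "diag Vs ends v f x u \<longleftrightarrow> u = pf (pv x)"
proof
  assume d: "diag Vs ends v f x u"
  then obtain S where S: "S \<in> squares Vs ends v f" "x \<in> S" "u \<in> S"
    by (auto simp: diag_def)
  then obtain x0 where "S = Q x0" by (auto simp: squares_eq)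
  then have "S = Q x" using Q_same S by metis
  then have "u \<in> {x, pv x, pf x, pf (pv x)}" using Q_eq(1)[OF x] S by simp
  moreover have "u \<noteq> x" "\<not> adj ends (v \<union> f) x u" using d by (auto simp: diag_def)
  ultimately show "u = pf (pv x)" using adjvf[OF x] by auto
next
  assume u: "u = pf (pv x)"
  have "Q x \<in> squares Vs ends v f" using x by (auto simp: squares_eq)
  moreover have "x \<in> Q x" "u \<in> Q x" using Q_eq(1)[OF x] u by auto
  moreover have "u \<noteq> x" using Q_eq(5)[OF x] u by simp
  moreover have "\<not> adj ends (v \<union> f) x u"
  proof
    assume "adj ends (v \<union> f) x u"
    then have "u = pv x \<or> u = pf x" using adjvf[OF x] by blast
    then show False using Q_eq(7,8)[OF x] u by auto
  qed
  ultimately show "diag Vs ends v f x u" unfolding diag_def by blast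
qed

abbreviation RV where "RV \<equiv> adj ends (v \<union> a_edges Es v f)"
abbreviation RF where "RF \<equiv> adj ends (f \<union> a_edges Es v f)"
abbreviation RZ where "RZ \<equiv> \<lambda>x y. diag Vs ends v f x y \<or> adj ends (a_edges Es v f) x y"

lemma diag_sym: "diag Vs ends v f x y \<Longrightarrow> diag Vs ends v f y x"
proof -
  assume d: "diag Vs ends v f x y"
  have a: "x \<noteq> y \<and> (\<exists>S\<in>squares Vs ends v f. x \<in> S \<and> y \<in> S) \<and> \<not> adj ends (v \<union> f) x y"
    by (rule d[unfolded diag_def])
  then obtain S where S: "S \<in> squares Vs ends v f" "x \<in> S" "y \<in> S" by blast
  have "\<not> adj ends (v \<union> f) y x" using a adj_sym[of ends "v \<union> f" y x] by blast
  moreover have "y \<noteq> x" using a by blast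
  ultimately show ?thesis using S unfolding diag_def by blast
qed

lemma RZ_sym: "RZ x y \<Longrightarrow> RZ y x"
  using diag_sym adj_sym[of ends "a_edges Es v f" x y] by blast

lemma RV_v: assumes x: "x \<in> Vs" shows "reach RV (pv x) = reach RV x"
proof -
  have "RV x (pv x)" using pv[OF x] adj_Un[of ends v "a_edges Es v f"] by blast
  then have "reach RV x = reach RV (pv x)" by (rule reach_step[rotated]) (erule adj_sym[THEN iffD1])
  then show ?thesis by simp
qed
lemma RF_f: assumes x: "x \<in> Vs" shows "reach RF (pf x) = reach RF x"
proof -
  have "RF x (pf x)" using pf[OF x] adj_Un[of ends f "a_edges Es v f"] by blast
  then have "reach RF x = reach RF (pf x)" by (rule reach_step[rotated]) (erule adj_sym[THEN iffD1])
  then show ?thesis by simp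
qed
lemma RZ_d: "x \<in> Vs \<Longrightarrow> reach RZ (pf (pv x)) = reach RZ x"
proof -
  assume x: "x \<in> Vs"
  have "RZ x (pf (pv x))" using diag_iff[OF x] by simp
  then have "reach RZ x = reach RZ (pf (pv x))" by (rule reach_step[rotated]) (rule RZ_sym)
  then show ?thesis by simp
qed

lemma ends_img:
  assumes "\<forall>u\<in>Q x. \<exists>y\<in>Q x. P u y"
  shows "square_ends R P (Q x) = (\<lambda>u. reach R u) ` Q x"
  using assms unfolding square_ends_def by blast

lemma endV: assumes x: "x \<in> Vs"
  shows "square_ends RV (adj ends v) (Q x) = {reach RV x, reach RV (pf x)}"
proof -
  have "\<forall>u\<in>Q x. \<exists>y\<in>Q x. adj ends v u y"
  proof
    fix u assume u: "u \<in> Q x"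
    then have "u \<in> Vs" using Q_Vs x by blast
    then show "\<exists>y\<in>Q x. adj ends v u y" using pv Q_closed_v[OF x u] by blast
  qed
  then have "square_ends RV (adj ends v) (Q x) = (\<lambda>u. reach RV u) ` Q x"
    by (rule ends_img)
  also have "\<dots> = {reach RV x, reach RV (pf x)}"
  proof -
    have e1: "reach RV (pv x) = reach RV x" using RV_v x by blast
    have e2: "reach RV (pf (pv x)) = reach RV (pf x)"
      using RV_v[of "pf x"] Q_eq(2)[OF x] pf_Vs x by simp
    show ?thesis using Q_eq(1)[OF x] e1 e2 by auto
  qed
  finally show ?thesis .
qed

lemma endF: assumes x: "x \<in> Vs"
  shows "square_ends RF (adj ends f) (Q x) = {reach RF x, reach RF (pv x)}"
proof -
  have "\<forall>u\<in>Q x. \<exists>y\<in>Q x. adj ends f u y"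
  proof
    fix u assume u: "u \<in> Q x"
    then have "u \<in> Vs" using Q_Vs x by blast
    then show "\<exists>y\<in>Q x. adj ends f u y" using pf Q_closed_f[OF x u] by blast
  qed
  then have "square_ends RF (adj ends f) (Q x) = (\<lambda>u. reach RF u) ` Q x"
    by (rule ends_img)
  also have "\<dots> = {reach RF x, reach RF (pv x)}"
  proof -
    have e1: "reach RF (pf x) = reach RF x" using RF_f x by blast
    have e2: "reach RF (pf (pv x)) = reach RF (pv x)"
      using RF_f[of "pv x"] pv_Vs x by simp
    show ?thesis using Q_eq(1)[OF x] e1 e2 by auto
  qed
  finally show ?thesis .
qed

lemma endZ: assumes x: "x \<in> Vs"
  shows "square_ends RZ (diag Vs ends v f) (Q x) = {reach RZ x, reach RZ (pv x)}"
proof -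
  have "\<forall>u\<in>Q x. \<exists>y\<in>Q x. diag Vs ends v f u y"
  proof
    fix u assume u: "u \<in> Q x"
    then have "u \<in> Vs" using Q_Vs x by blast
    moreover have "pf (pv u) \<in> Q x" using Q_closed_f[OF x] Q_closed_v[OF x u] by blast
    ultimately show "\<exists>y\<in>Q x. diag Vs ends v f u y" using diag_iff by blast
  qed
  then have "square_ends RZ (diag Vs ends v f) (Q x) = (\<lambda>u. reach RZ u) ` Q x"
    by (rule ends_img)
  also have "\<dots> = {reach RZ x, reach RZ (pv x)}"
  proof -
    have e1: "reach RZ (pf x) = reach RZ (pv x)"
      using RZ_d[of "pv x"] pv_pv[OF x] pv_Vs[OF x] by simp
    have e2: "reach RZ (pf (pv x)) = reach RZ x" using RZ_d x by blast
    show ?thesis using Q_eq(1)[OF x] e1 e2 by auto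
  qed
  finally show ?thesis .
qed

lemma RZ_step: assumes "RZ a b" "a \<in> Vs" shows "b \<in> Vs"
proof (cases "diag Vs ends v f a b")
  case True then show ?thesis using diag_iff assms(2) pf_Vs pv_Vs by metis
next
  case False then show ?thesis using assms adj_in[of "a_edges Es v f"]
    by (auto simp: a_edges_def)
qed

end

lemma cut_mem: "endp S = {A, B} \<Longrightarrow> S \<in> cut SQ endp X \<longleftrightarrow> S \<in> SQ \<and> ((A \<in> X) \<noteq> (B \<in> X))"
  by (auto simp: cut_def)

theorem theorem2p5:
  fixes Vs :: "'v set" and Es :: "'e set" and ends :: "'e \<Rightarrow> 'v set" and v f :: "'e set"
  assumes "is_map Vs Es ends v f"
  shows "V_space Vs Es ends v f \<inter> F_space Vs Es ends v f \<subseteq> Z_space Vs Es ends v f"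
proof
  interpret mapl Vs Es ends v f by (rule mapl.intro) (rule assms)
  fix T assume T: "T \<in> V_space Vs Es ends v f \<inter> F_space Vs Es ends v f"
  define SQ where "SQ = squares Vs ends v f"
  define RV' where "RV' = adj ends (v \<union> a_edges Es v f)"
  define RF' where "RF' = adj ends (f \<union> a_edges Es v f)"
  define RZ' where "RZ' = (\<lambda>x y. diag Vs ends v f x y \<or> adj ends (a_edges Es v f) x y)"
  obtain X where X: "X \<subseteq> comps Vs RV'" "T = cut SQ (square_ends RV' (adj ends v)) X"
    using T unfolding V_space_def G_cut_space_def cut_space_def SQ_def RV'_def by blast
  obtain Y where Y: "Y \<subseteq> comps Vs RF'" "T = cut SQ (square_ends RF' (adj ends f)) Y"
    using T unfolding F_space_def G_cut_space_def cut_space_def SQ_def RF'_def by blast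
  have QSQ: "Q x \<in> SQ" if "x \<in> Vs" for x using that unfolding SQ_def squares_eq by blast
  have kV: "Q x \<in> T \<longleftrightarrow> ((reach RV' x \<in> X) \<noteq> (reach RV' (pf x) \<in> X))" if x: "x \<in> Vs" for x
  proof -
    have "square_ends RV' (adj ends v) (Q x) = {reach RV' x, reach RV' (pf x)}"
      unfolding RV'_def by (rule endV[OF x])
    then have "Q x \<in> cut SQ (square_ends RV' (adj ends v)) X \<longleftrightarrow>
      Q x \<in> SQ \<and> ((reach RV' x \<in> X) \<noteq> (reach RV' (pf x) \<in> X))" by (rule cut_mem)
    then show ?thesis using X(2) QSQ[OF x] by simp
  qed
  have kF: "Q x \<in> T \<longleftrightarrow> ((reach RF' x \<in> Y) \<noteq> (reach RF' (pv x) \<in> Y))" if x: "x \<in> Vs" for x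
  proof -
    have "square_ends RF' (adj ends f) (Q x) = {reach RF' x, reach RF' (pv x)}"
      unfolding RF'_def by (rule endF[OF x])
    then have "Q x \<in> cut SQ (square_ends RF' (adj ends f)) Y \<longleftrightarrow>
      Q x \<in> SQ \<and> ((reach RF' x \<in> Y) \<noteq> (reach RF' (pv x) \<in> Y))" by (rule cut_mem)
    then show ?thesis using Y(2) QSQ[OF x] by simp
  qed
  define g where "g u \<longleftrightarrow> ((reach RV' u \<in> X) \<noteq> (reach RF' u \<in> Y))" for u
  have inv: "b \<in> Vs \<and> (g a \<longleftrightarrow> g b)" if "RZ'\<^sup>*\<^sup>* a b" "a \<in> Vs" for a b
    using that(1)
  proof (induction rule: rtranclp_induct)
    case base then show ?case using that(2) by simp
  next
    case (step b c)
    have b: "b \<in> Vs" using step.IH by blast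
    have rz: "RZ b c" using step.hyps(2) unfolding RZ'_def .
    have c: "c \<in> Vs" by (rule RZ_step[OF rz b])
    have "g b \<longleftrightarrow> g c"
    proof (cases "diag Vs ends v f b c")
      case True
      then have cb: "c = pf (pv b)" using diag_iff[OF b] by blast
      have e1: "reach RV' c = reach RV' (pf b)"
        using RV_v[OF pf_Vs[OF b]] Q_eq(2)[OF b] cb unfolding RV'_def by simp
      have e2: "reach RF' c = reach RF' (pv b)"
        using RF_f[OF pv_Vs[OF b]] cb unfolding RF'_def by simp
      have "((reach RV' b \<in> X) \<noteq> (reach RV' (pf b) \<in> X)) \<longleftrightarrow>
            ((reach RF' b \<in> Y) \<noteq> (reach RF' (pv b) \<in> Y))"
        using kV[OF b] kF[OF b] by blast
      then show ?thesis unfolding g_def e1 e2 by blast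
    next
      case False
      then have ab: "adj ends (a_edges Es v f) b c" using rz by blast
      have "RV' b c" using ab adj_Un[of ends v "a_edges Es v f" b c] unfolding RV'_def by blast
      then have e1: "reach RV' b = reach RV' c"
        by (rule reach_step[rotated]) (simp only: RV'_def adj_sym)
      have "RF' b c" using ab adj_Un[of ends f "a_edges Es v f" b c] unfolding RF'_def by blast
      then have e2: "reach RF' b = reach RF' c"
        by (rule reach_step[rotated]) (simp only: RF'_def adj_sym)
      show ?thesis unfolding g_def e1 e2 by blast
    qed
    then show ?case using c step.IH by blast
  qed
  define W where "W = {reach RZ' u | u. u \<in> Vs \<and> g u}"
  have W: "W \<subseteq> comps Vs RZ'" unfolding W_def comps_def by blast
  have memW: "reach RZ' u \<in> W \<longleftrightarrow> g u" if u: "u \<in> Vs" for u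
  proof
    assume "reach RZ' u \<in> W"
    then obtain w where w: "reach RZ' u = reach RZ' w" "w \<in> Vs" "g w" unfolding W_def by blast
    have "u \<in> reach RZ' w" using w(1) reach_self[of u RZ'] by simp
    then have "RZ'\<^sup>*\<^sup>* w u" by (simp add: reach_def)
    then show "g u" using inv[of w u] w by blast
  next
    assume "g u" then show "reach RZ' u \<in> W" unfolding W_def using u by blast
  qed
  have "T = cut SQ (square_ends RZ' (diag Vs ends v f)) W"
  proof (rule set_eqI)
    fix S
    show "S \<in> T \<longleftrightarrow> S \<in> cut SQ (square_ends RZ' (diag Vs ends v f)) W"
    proof (cases "S \<in> SQ")
      case False
      then show ?thesis using X(2) unfolding cut_def by blast
    next
      case True
      then obtain x where x: "x \<in> Vs" "S = Q x" unfolding SQ_def squares_eq by blast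
      have "square_ends RZ' (diag Vs ends v f) (Q x) = {reach RZ' x, reach RZ' (pv x)}"
        unfolding RZ'_def by (rule endZ[OF x(1)])
      then have "Q x \<in> cut SQ (square_ends RZ' (diag Vs ends v f)) W \<longleftrightarrow>
        Q x \<in> SQ \<and> ((reach RZ' x \<in> W) \<noteq> (reach RZ' (pv x) \<in> W))" by (rule cut_mem)
      then have "S \<in> cut SQ (square_ends RZ' (diag Vs ends v f)) W \<longleftrightarrow> (g x \<noteq> g (pv x))"
        using True x memW[OF x(1)] memW[OF pv_Vs[OF x(1)]] by simp
      moreover have "reach RV' (pv x) = reach RV' x" using RV_v[OF x(1)] unfolding RV'_def .
      ultimately show ?thesis using kF[OF x(1)] x(2) unfolding g_def by auto
    qed
  qed
  then show "T \<in> Z_space Vs Es ends v f"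
    using W unfolding Z_space_def G_cut_space_def cut_space_def SQ_def RZ'_def by blast
qed

end
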